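(* Let $k,n,h$ be positive integers with $k\leqslant n$ and $h\geqslant 3$, and let $C=(C_1,\ldots,C_h)$ be a tuple of pairwise distinct elements of $[n]^k_<$ which is a shelling order. If $|C_{h-1}\cap C_h|<k-1$, then $(C_1,\ldots,C_{h-2},C_h,C_{h-1})$ is a shelling order.
   Context: $[n]:=\{1,\ldots,n\}$; $[n]^k_<$ denotes the set of $k$-element subsets of $[n]$. A tuple $C=(C_1,\ldots,C_h)$ of pairwise distinct elements of $[n]^k_<$ is a shelling order if for all $i<j$ in $[h]$ there exists $z<j$ with $|C_z\cap C_j|=k-1$ and $C_i\cap C_j\subseteq C_z\cap C_j$. *)

theory Defs
  imports Main
begin

definition ksubsets :: "nat \<Rightarrow> nat \<Rightarrow> nat set set" where
  "ksubsets n k = {A. A \<subseteq> {1..n} \<and> card A = k}"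

text \<open>A tuple (C_1,...,C_h) is represented by a list C of length h, with C_i = C ! (i-1).\<close>
definition shelling_order :: "nat \<Rightarrow> nat \<Rightarrow> nat set list \<Rightarrow> bool" where
  "shelling_order n k C \<longleftrightarrow>
     distinct C \<and> set C \<subseteq> ksubsets n k \<and>
     (\<forall>j < length C. \<forall>i < j. \<exists>z < j.
        card (C ! z \<inter> C ! j) = k - 1 \<and> C ! i \<inter> C ! j \<subseteq> C ! z \<inter> C ! j)"

end

theory Submission
  imports Defs
begin

theorem proposition5p3:
  fixes n k h :: nat and C :: "nat set list"
  assumes "0 < k" and "k \<le> n" and "3 \<le> h"
    and "length C = h"
    and "distinct C" and "set C \<subseteq> ksubsets n k"
    and "shelling_order n k C"
    and "card (C ! (h - 2) \<inter> C ! (h - 1)) < k - 1"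
  shows "shelling_order n k (take (h - 2) C @ [C ! (h - 1), C ! (h - 2)])"
proof -
  define D where "D = take (h - 2) C @ [C ! (h - 1), C ! (h - 2)]"
  have len: "length D = h" using assms(3,4) by (simp add: D_def)
  have D1: "D ! i = C ! i" if "i < h - 2" for i
    using that assms(4) by (simp add: D_def nth_append)
  have D2: "D ! (h - 2) = C ! (h - 1)" using assms(3,4) by (simp add: D_def nth_append)
  have D3: "D ! (h - 1) = C ! (h - 2)" using assms(3,4)
    by (auto simp: D_def nth_append numeral_2_eq_2)
  have sh: "\<And>j i. j < h \<Longrightarrow> i < j \<Longrightarrow> \<exists>z < j.
        card (C ! z \<inter> C ! j) = k - 1 \<and> C ! i \<inter> C ! j \<subseteq> C ! z \<inter> C ! j"
    using assms(7,4) unfolding shelling_order_def by blast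
  have dist: "distinct D"
  proof -
    have "D = take (h-2) C @ [C!(h-1), C!(h-2)]" by (rule D_def)
    have eq: "C = take (h-2) C @ [C!(h-2), C!(h-1)]"
    proof (rule nth_equalityI)
      show "length C = length (take (h-2) C @ [C!(h-2), C!(h-1)])" using assms(3,4) by simp
    next
      fix i assume "i < length C"
      then show "C ! i = (take (h-2) C @ [C!(h-2), C!(h-1)]) ! i"
      proof -
        consider "i < h - 2" | "i = h - 2" | "i = h - 1" using \<open>i < length C\<close> assms(4) by linarith
        then show ?thesis using assms(3,4)
        proof cases
          case 1 then show ?thesis using assms(3,4) by (simp add: nth_append)
        next
          case 2 then show ?thesis using assms(3,4) by (simp add: nth_append)
        next
          case 3
          have "Suc (Suc i) - length C = 1" using 3 assms(3,4) by simp
          then show ?thesis using 3 assms(3,4) by (auto simp: nth_append)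
        qed
      qed
    qed
    have "distinct (take (h-2) C @ [C!(h-2), C!(h-1)])" using assms(5) eq by metis
    then show ?thesis unfolding D_def by auto
  qed
  have setD: "set D \<subseteq> ksubsets n k"
  proof -
    have "set D \<subseteq> set C" unfolding D_def using assms(3,4) in_set_takeD
      by (auto intro!: nth_mem dest: in_set_takeD)
    then show ?thesis using assms(6) by blast
  qed
  have main: "\<exists>z < j. card (D ! z \<inter> D ! j) = k - 1 \<and> D ! i \<inter> D ! j \<subseteq> D ! z \<inter> D ! j"
    if j: "j < h" and ij: "i < j" for i j
  proof -
    consider "j < h - 2" | "j = h - 2" | "j = h - 1" using j by linarith
    then show ?thesis
    proof cases
      case 1
      then obtain z where "z < j" "card (C ! z \<inter> C ! j) = k - 1" "C ! i \<inter> C ! j \<subseteq> C ! z \<inter> C ! j"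
        using sh[of j i] ij j by auto
      then show ?thesis using D1 1 ij by (intro exI[of _ z]) auto
    next
      case 2
      have "i < h - 1" using 2 ij by linarith
      then obtain z where z: "z < h - 1" "card (C ! z \<inter> C ! (h-1)) = k - 1"
          "C ! i \<inter> C ! (h-1) \<subseteq> C ! z \<inter> C ! (h-1)"
        using sh[of "h-1" i] assms(3) by auto
      have "z \<noteq> h - 2" using z(2) assms(8) by auto
      then have "z < h - 2" using z(1) by linarith
      then show ?thesis using D1 D2 2 ij z by (intro exI[of _ z]) auto
    next
      case 3
      show ?thesis
      proof (cases "i < h - 2")
        case True
        then obtain z where z: "z < h - 2" "card (C ! z \<inter> C ! (h-2)) = k - 1"
            "C ! i \<inter> C ! (h-2) \<subseteq> C ! z \<inter> C ! (h-2)"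
          using sh[of "h-2" i] assms(3) by auto
        then show ?thesis using D1 D3 3 True assms(3) by (intro exI[of _ z]) auto
      next
        case False
        then have i: "i = h - 2" using ij 3 by linarith
        have hh: "h - 2 < h - 1" using assms(3) by linarith
        obtain z where z: "z < h - 1" "card (C ! z \<inter> C ! (h-1)) = k - 1"
            "C ! (h-2) \<inter> C ! (h-1) \<subseteq> C ! z \<inter> C ! (h-1)"
          using sh[of "h-1" "h-2", OF _ hh] assms(3) by auto
        have "z \<noteq> h - 2" using z(2) assms(8) by auto
        then have zl: "z < h - 2" using z(1) by linarith
        obtain z' where z': "z' < h - 2" "card (C ! z' \<inter> C ! (h-2)) = k - 1"
            "C ! z \<inter> C ! (h-2) \<subseteq> C ! z' \<inter> C ! (h-2)"
          using sh[of "h-2" z] assms(3) zl by auto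
        have "D ! i \<inter> D ! j \<subseteq> D ! z' \<inter> D ! j"
          using z(3) z'(3) D1[OF z'(1)] D2 D3 i 3 by auto
        then show ?thesis using z' D1 D3 3 assms(3) by (intro exI[of _ z']) auto
      qed
    qed
  qed
  show ?thesis unfolding D_def[symmetric] shelling_order_def
    using dist setD main len by auto
qed

end
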